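(* Let $A$ (in $\mathcal H$) and $B$ (in $\mathcal K$) be closed densely defined operators with $A\dashv B$ via a bounded intertwining operator $T$. Assume that $T^{-1}$ is everywhere defined and bounded and that $TD(A)$ is a core for $B$. Then $\sigma_p(A)\subseteq\sigma_p(B)\subseteq\sigma(B)\subseteq\sigma(A)$.
   Context: A bounded operator $T:\mathcal H\to\mathcal K$ is a bounded intertwining operator for $A$ and $B$ if $T D(A)\subseteq D(B)$ and $BT\xi=TA\xi$ for all $\xi\in D(A)$. $A\dashv B$ (quasi-similarity) means there is a bounded intertwining operator $T$ for $A$ and $B$ that is injective with densely defined inverse $T^{-1}$. $\sigma(A)$ is the spectrum (complement of the set of $\lambda$ for which $(A-\lambda I)^{-1}$ exists as a bounded everywhere defined operator) and $\sigma_p(A)$ the set of eigenvalues. *)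

theory Defs
  imports "HOL-Analysis.Analysis"
begin

text \<open>HOL-Analysis only provides real inner product spaces, so complex vector
spaces / complex Hilbert spaces are introduced here as type classes
(in the style of the AFP entry Complex_Bounded_Operators).\<close>

class complex_vector = real_vector +
  fixes scaleC :: "complex \<Rightarrow> 'a \<Rightarrow> 'a" (infixr \<open>*\<^sub>C\<close> 75)
  assumes scaleC_add_right: "a *\<^sub>C (x + y) = a *\<^sub>C x + a *\<^sub>C y"
    and scaleC_add_left: "(a + b) *\<^sub>C x = a *\<^sub>C x + b *\<^sub>C x"
    and scaleC_scaleC: "a *\<^sub>C (b *\<^sub>C x) = (a * b) *\<^sub>C x"
    and scaleC_one: "1 *\<^sub>C x = x"
    and scaleR_scaleC: "scaleR r = scaleC (complex_of_real r)"

class complex_normed_vector = complex_vector + real_normed_vector +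
  assumes norm_scaleC: "norm (a *\<^sub>C x) = cmod a * norm x"

class complex_inner = complex_normed_vector +
  fixes cinner :: "'a \<Rightarrow> 'a \<Rightarrow> complex"
  assumes cinner_commute: "cinner x y = cnj (cinner y x)"
    and cinner_add_left: "cinner (x + y) z = cinner x z + cinner y z"
    and cinner_scaleC_left: "cinner (a *\<^sub>C x) y = cnj a * cinner x y"
    and cinner_ge_zero: "0 \<le> Re (cinner x x) \<and> Im (cinner x x) = 0"
    and cinner_eq_zero_iff: "cinner x x = 0 \<longleftrightarrow> x = 0"
    and norm_eq_sqrt_cinner: "norm x = sqrt (Re (cinner x x))"

class chilbert_space = complex_inner + complete_space

text \<open>A (possibly unbounded) operator from H to K is represented by its domain
D :: 'a set together with a function A :: 'a \<Rightarrow> 'b (values outside D are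
irrelevant).\<close>

definition csubspace :: "'a::complex_vector set \<Rightarrow> bool" where
  "csubspace D \<longleftrightarrow> 0 \<in> D \<and> (\<forall>x\<in>D. \<forall>y\<in>D. x + y \<in> D) \<and> (\<forall>c. \<forall>x\<in>D. c *\<^sub>C x \<in> D)"

definition lin_op :: "'a::complex_vector set \<Rightarrow> ('a \<Rightarrow> 'b::complex_vector) \<Rightarrow> bool" where
  "lin_op D A \<longleftrightarrow> csubspace D \<and> (\<forall>x\<in>D. \<forall>y\<in>D. A (x + y) = A x + A y)
      \<and> (\<forall>c. \<forall>x\<in>D. A (c *\<^sub>C x) = c *\<^sub>C A x)"

definition graph :: "'a set \<Rightarrow> ('a \<Rightarrow> 'b) \<Rightarrow> ('a \<times> 'b) set" where
  "graph D A = {(x, A x) | x. x \<in> D}"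

definition closed_op :: "'a::complex_normed_vector set \<Rightarrow> ('a \<Rightarrow> 'b::complex_normed_vector) \<Rightarrow> bool" where
  "closed_op D A \<longleftrightarrow> lin_op D A \<and> closed (graph D A)"

definition densely_defined :: "'a::complex_normed_vector set \<Rightarrow> bool" where
  "densely_defined D \<longleftrightarrow> closure D = UNIV"

definition cblinear :: "('a::complex_normed_vector \<Rightarrow> 'b::complex_normed_vector) \<Rightarrow> bool" where
  "cblinear T \<longleftrightarrow> bounded_linear T \<and> (\<forall>c x. T (c *\<^sub>C x) = c *\<^sub>C T x)"

definition intertwining :: "('a::complex_normed_vector \<Rightarrow> 'b::complex_normed_vector)
    \<Rightarrow> 'a set \<Rightarrow> ('a \<Rightarrow> 'a) \<Rightarrow> 'b set \<Rightarrow> ('b \<Rightarrow> 'b) \<Rightarrow> bool" where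
  "intertwining T DA A DB B \<longleftrightarrow> cblinear T \<and> T ` DA \<subseteq> DB \<and> (\<forall>\<xi>\<in>DA. B (T \<xi>) = T (A \<xi>))"

text \<open>Quasi-similarity A \<dashv> B via T: T is a bounded intertwining operator,
injective, with densely defined inverse (i.e. dense range).\<close>
definition quasi_sim_via :: "('a::complex_normed_vector \<Rightarrow> 'b::complex_normed_vector)
    \<Rightarrow> 'a set \<Rightarrow> ('a \<Rightarrow> 'a) \<Rightarrow> 'b set \<Rightarrow> ('b \<Rightarrow> 'b) \<Rightarrow> bool" where
  "quasi_sim_via T DA A DB B \<longleftrightarrow> intertwining T DA A DB B \<and> inj T \<and> closure (range T) = UNIV"

definition is_core :: "'a::complex_normed_vector set \<Rightarrow> 'a set \<Rightarrow> ('a \<Rightarrow> 'b::complex_normed_vector) \<Rightarrow> bool" where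
  "is_core C D B \<longleftrightarrow> csubspace C \<and> C \<subseteq> D \<and> closure (graph C B) = graph D B"

definition op_spectrum :: "'a::complex_normed_vector set \<Rightarrow> ('a \<Rightarrow> 'a) \<Rightarrow> complex set" where
  "op_spectrum D A = {z. \<not> (\<exists>R. cblinear R
       \<and> (\<forall>y. R y \<in> D \<and> A (R y) - z *\<^sub>C R y = y)
       \<and> (\<forall>x\<in>D. R (A x - z *\<^sub>C x) = x))}"

definition point_spectrum :: "'a::complex_normed_vector set \<Rightarrow> ('a \<Rightarrow> 'a) \<Rightarrow> complex set" where
  "point_spectrum D A = {z. \<exists>\<xi>\<in>D. \<xi> \<noteq> 0 \<and> A \<xi> = z *\<^sub>C \<xi>}"

end

theory Submission
  imports Defs
begin

lemma bl_scaleC: "bounded_linear (\<lambda>x::'a::complex_normed_vector. z *\<^sub>C x)"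
proof (rule bounded_linear_intro[where K="cmod z"])
  show "z *\<^sub>C (x + y) = z *\<^sub>C x + z *\<^sub>C y" for x y :: 'a by (rule scaleC_add_right)
  show "z *\<^sub>C (r *\<^sub>R x) = r *\<^sub>R (z *\<^sub>C x)" for r and x :: 'a
    by (simp add: scaleR_scaleC scaleC_scaleC mult.commute)
  show "norm (z *\<^sub>C x) \<le> norm x * cmod z" for x :: 'a by (simp add: norm_scaleC mult.commute)
qed

theorem proposition3p14:
  fixes T :: "'a::chilbert_space \<Rightarrow> 'b::chilbert_space"
    and DA :: "'a set" and A :: "'a \<Rightarrow> 'a"
    and DB :: "'b set" and B :: "'b \<Rightarrow> 'b"
  assumes "closed_op DA A" and "densely_defined DA"
    and "closed_op DB B" and "densely_defined DB"
    and "quasi_sim_via T DA A DB B"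
    and "surj T" and "cblinear (inv T)"
    and "is_core (T ` DA) DB B"
  shows "point_spectrum DA A \<subseteq> point_spectrum DB B
    \<and> point_spectrum DB B \<subseteq> op_spectrum DB B
    \<and> op_spectrum DB B \<subseteq> op_spectrum DA A"
proof -
  have Tc: "cblinear T" and TD: "T ` DA \<subseteq> DB" and TB: "\<And>\<xi>. \<xi> \<in> DA \<Longrightarrow> B (T \<xi>) = T (A \<xi>)"
    and inj: "inj T"
    using assms(5) unfolding quasi_sim_via_def intertwining_def by auto
  have Tbl: "bounded_linear T" and TC: "\<And>c x. T (c *\<^sub>C x) = c *\<^sub>C T x" using Tc cblinear_def by auto
  interpret Tl: bounded_linear T by (rule Tbl)
  have Ibl: "bounded_linear (inv T)" and IC: "\<And>c x. inv T (c *\<^sub>C x) = c *\<^sub>C inv T x"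
    using assms(7) cblinear_def by auto
  have TI: "\<And>y. T (inv T y) = y" using assms(6) by (simp add: surj_f_inv_f)
  have IT: "\<And>x. inv T (T x) = x" using inj by (simp add: inv_f_f)
  have P1: "point_spectrum DA A \<subseteq> point_spectrum DB B"
  proof
    fix z assume "z \<in> point_spectrum DA A"
    then obtain \<xi> where "\<xi> \<in> DA" "\<xi> \<noteq> 0" "A \<xi> = z *\<^sub>C \<xi>" unfolding point_spectrum_def by auto
    moreover have "T \<xi> \<noteq> 0" using \<open>\<xi> \<noteq> 0\<close> inj Tl.zero by (metis injD)
    ultimately show "z \<in> point_spectrum DB B" unfolding point_spectrum_def
      using TD TB TC by (intro CollectI bexI[of _ "T \<xi>"]) auto
  qed
  have P2: "point_spectrum DB B \<subseteq> op_spectrum DB B"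
  proof
    fix z assume "z \<in> point_spectrum DB B"
    then obtain \<xi> where x: "\<xi> \<in> DB" "\<xi> \<noteq> 0" "B \<xi> = z *\<^sub>C \<xi>" unfolding point_spectrum_def by auto
    show "z \<in> op_spectrum DB B" unfolding op_spectrum_def
    proof (clarify)
      fix R assume R: "cblinear R" "\<forall>x\<in>DB. R (B x - z *\<^sub>C x) = x"
      then have "R 0 = \<xi>" using x by auto
      moreover have "R 0 = 0" using R(1) cblinear_def linear_0 bounded_linear.linear by blast
      ultimately show False using x by simp
    qed
  qed
  have P3: "op_spectrum DB B \<subseteq> op_spectrum DA A"
  proof
    fix z assume zB: "z \<in> op_spectrum DB B"
    show "z \<in> op_spectrum DA A"
    proof (rule ccontr)
      assume "z \<notin> op_spectrum DA A"
      then obtain R where Rc: "cblinear R" and R1: "\<And>y. R y \<in> DA \<and> A (R y) - z *\<^sub>C R y = y"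
        and R2: "\<And>x. x \<in> DA \<Longrightarrow> R (A x - z *\<^sub>C x) = x"
        unfolding op_spectrum_def by auto
      have Rbl: "bounded_linear R" and RC: "\<And>c x. R (c *\<^sub>C x) = c *\<^sub>C R x" using Rc cblinear_def by auto
      interpret Rl: bounded_linear R by (rule Rbl)
      interpret Il: bounded_linear "inv T" by (rule Ibl)
      define S where "S = (\<lambda>y. T (R (inv T y)))"
      have Sbl: "bounded_linear S" unfolding S_def
        using bounded_linear_compose[OF Tbl bounded_linear_compose[OF Rbl Ibl]] by (simp add: o_def)
      interpret Sl: bounded_linear S by (rule Sbl)
      have SC: "S (c *\<^sub>C x) = c *\<^sub>C S x" for c x unfolding S_def by (simp add: TC RC IC)
      have Sc: "cblinear S" using Sbl SC cblinear_def by blast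
      have S1: "S y \<in> DB \<and> B (S y) - z *\<^sub>C S y = y" for y
      proof -
        have a: "R (inv T y) \<in> DA" using R1 by blast
        have "B (S y) - z *\<^sub>C S y = T (A (R (inv T y)) - z *\<^sub>C R (inv T y))"
          unfolding S_def using TB[OF a] by (simp add: Tl.diff TC)
        also have "\<dots> = y" using R1 TI by simp
        finally show ?thesis using a TD S_def by auto
      qed
      define P where "P = {p. S (snd p) - z *\<^sub>C S (fst p) = fst p}"
      have "closed P" unfolding P_def
        by (intro closed_Collect_eq continuous_intros
            bounded_linear.continuous_on[OF bl_scaleC] Sl.continuous_on continuous_on_fst continuous_on_snd)
      moreover have "graph (T ` DA) B \<subseteq> P"
      proof
        fix p assume "p \<in> graph (T ` DA) B"
        then obtain \<xi> where \<xi>: "\<xi> \<in> DA" "p = (T \<xi>, B (T \<xi>))" unfolding graph_def by auto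
        have "S (B (T \<xi>)) - z *\<^sub>C S (T \<xi>) = S (B (T \<xi>) - z *\<^sub>C T \<xi>)" by (simp add: Sl.diff SC)
        also have "\<dots> = T (R (A \<xi> - z *\<^sub>C \<xi>))" unfolding S_def using TB[OF \<xi>(1)]
          by (metis IT TC Tl.diff)
        also have "\<dots> = T \<xi>" using R2[OF \<xi>(1)] by simp
        finally show "p \<in> P" unfolding P_def using \<xi>(2) by simp
      qed
      ultimately have "closure (graph (T ` DA) B) \<subseteq> P" by (rule closure_minimal[rotated])
      hence G: "graph DB B \<subseteq> P" using assms(8) unfolding is_core_def by simp
      have S2: "S (B x - z *\<^sub>C x) = x" if "x \<in> DB" for x
      proof -
        have "(x, B x) \<in> P" using G that unfolding graph_def by auto
        thus ?thesis unfolding P_def by (simp add: Sl.diff SC)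
      qed
      have "z \<notin> op_spectrum DB B" unfolding op_spectrum_def using Sc S1 S2 by blast
      thus False using zB by simp
    qed
  qed
  show ?thesis using P1 P2 P3 by blast
qed

end
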